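(* Let $\tilde f(t)=t\int_{1}^{\infty}x^{-tx}\,dx$ for real $t>0$. Then $\tilde f(t)\to1$ as $t\to+\infty$.
   Context: $x^{-tx}=\exp(-tx\ln x)$ for $x\ge1$. *)

theory Defs
  imports "HOL-Analysis.Analysis"
begin

definition ftilde :: "real \<Rightarrow> real" where
  "ftilde t = t * integral {1..} (\<lambda>x::real. x powr (- t * x))"

end

theory Submission
  imports Defs "HOL-Real_Asymp.Real_Asymp"
begin

lemma ftilde_eq:
  "ftilde t = t * integral {1..} (\<lambda>x::real. exp (- t * x * ln x))"
  unfolding ftilde_def
  by (intro arg_cong2[where f="(*)"] refl integral_cong) (auto simp: powr_def)

lemma xlnx_ge: assumes "(x::real) \<ge> 1" shows "x - 1 \<le> x * ln x"
proof -
  have "ln (1/x) \<le> 1/x - 1" using assms by (intro ln_le_minus_one) auto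
  hence "ln x \<ge> 1 - 1/x" using assms by (simp add: ln_div)
  hence "x * ln x \<ge> x * (1 - 1/x)" using assms by (intro mult_left_mono) auto
  moreover have "x * (1 - 1/x) = x - 1" using assms by (simp add: field_simps)
  ultimately show ?thesis by simp
qed

lemma cont_h: "continuous_on {1..} (\<lambda>x::real. exp (- t * x * ln x))"
  by (intro continuous_intros) auto

lemma integrable_h:
  assumes t: "t > 0"
  shows "(\<lambda>x::real. exp (- t * x * ln x)) integrable_on {1..}"
proof (rule measurable_bounded_by_integrable_imp_integrable_real)
  show "(\<lambda>x::real. exp (- t * x * ln x)) \<in> borel_measurable (lebesgue_on {1..})"
    by (intro continuous_imp_measurable_on_sets_lebesgue cont_h) auto
  show "(\<lambda>x. exp t * exp (- t * x)) integrable_on {1..}"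
    using has_integral_mult_right[OF has_integral_exp_minus_to_infinity[OF t, of 1], of "exp t"]
    unfolding integrable_on_def by blast
  fix x :: real assume "x \<in> {1..}"
  hence "x - 1 \<le> x * ln x" by (intro xlnx_ge) auto
  hence "t * (x - 1) \<le> t * (x * ln x)" using t by (intro mult_left_mono) auto
  hence "- t * x * ln x \<le> t + - t * x" by (simp add: algebra_simps)
  hence "exp (- t * x * ln x) \<le> exp (t + - t * x)" by simp
  thus "\<bar>exp (- t * x * ln x)\<bar> \<le> exp t * exp (- t * x)" by (simp add: mult_exp_exp)
qed auto

lemma upper:
  assumes t: "t > 0"
  shows "ftilde t \<le> 1"
proof -
  have hi: "((\<lambda>x. exp t * exp (- t * x)) has_integral exp t * (exp (-t*1)/t)) {1..}"
    using has_integral_exp_minus_to_infinity[OF t, of 1] by (intro has_integral_mult_right)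
  have "integral {1..} (\<lambda>x::real. exp (- t * x * ln x)) \<le> exp t * (exp (-t*1)/t)"
  proof (rule has_integral_le[OF integrable_integral[OF integrable_h[OF t]] hi])
    fix x :: real assume "x \<in> {1..}"
    hence "x - 1 \<le> x * ln x" by (intro xlnx_ge) auto
    hence "t * (x - 1) \<le> t * (x * ln x)" using t by (intro mult_left_mono) auto
    hence "- t * x * ln x \<le> t + - t * x" by (simp add: algebra_simps)
    hence "exp (- t * x * ln x) \<le> exp (t + - t * x)" by simp
    thus "exp (- t * x * ln x) \<le> exp t * exp (- t * x)" by (simp add: mult_exp_exp)
  qed
  also have "\<dots> = 1 / t" by (simp add: exp_minus field_simps)
  finally show ?thesis using t by (simp add: ftilde_eq field_simps)
qed

lemma lower:
  assumes t: "t > 0" and d: "d > 0"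
  shows "(1 - exp (- (t * (1 + d)) * d)) / (1 + d) \<le> ftilde t"
proof -
  define a where "a = t * (1 + d)"
  have a: "a > 0" using t d by (simp add: a_def)
  have hi: "((\<lambda>x. exp (- a * (x - 1))) has_integral
      ((- exp (- a * ((1+d) - 1)) / a) - (- exp (- a * (1 - 1)) / a))) {1..1+d}"
    using a d
    by (intro fundamental_theorem_of_calculus)
       (auto intro!: derivative_eq_intros
             simp flip: has_real_derivative_iff_has_vector_derivative simp: field_simps)
  have I1: "(\<lambda>x::real. exp (- t * x * ln x)) integrable_on {1..1+d}"
    by (rule integrable_on_subinterval[OF integrable_h[OF t]]) auto
  have "(1 - exp (- a * d)) / a \<le> integral {1..1+d} (\<lambda>x::real. exp (- t * x * ln x))"
  proof (rule has_integral_le[OF _ integrable_integral[OF I1]])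
    show "((\<lambda>x. exp (- a * (x - 1))) has_integral (1 - exp (- a * d)) / a) {1..1+d}"
      using hi a by (simp add: field_simps)
    fix x :: real assume x: "x \<in> {1..1+d}"
    have "ln x \<le> x - 1" using x by (intro ln_le_minus_one) auto
    hence "x * ln x \<le> (1 + d) * (x - 1)" using x
      by (intro mult_mono) (use d in auto)
    hence "t * (x * ln x) \<le> t * ((1 + d) * (x - 1))" using t by (intro mult_left_mono) auto
    hence "- a * (x - 1) \<le> - t * x * ln x" by (simp add: a_def algebra_simps)
    thus "exp (- a * (x - 1)) \<le> exp (- t * x * ln x)" by simp
  qed
  also have "\<dots> \<le> integral {1..} (\<lambda>x::real. exp (- t * x * ln x))"
    by (rule integral_subset_le) (use I1 integrable_h[OF t] in auto)
  finally have "t * ((1 - exp (- a * d)) / a) \<le> ftilde t"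
    unfolding ftilde_eq using t by (intro mult_left_mono) auto
  moreover have "t * ((1 - exp (- a * d)) / a) = (1 - exp (- (t * (1 + d)) * d)) / (1 + d)"
    using t d unfolding a_def by (simp add: divide_simps)
  ultimately show ?thesis by simp
qed

theorem mainTheorem9:
  shows "(ftilde \<longlongrightarrow> 1) at_top"
proof (rule tendsto_sandwich)
  let ?L = "\<lambda>t::real. (1 - exp (- (t * (1 + 1 / sqrt t)) * (1 / sqrt t))) / (1 + 1 / sqrt t)"
  show "\<forall>\<^sub>F t in at_top. ?L t \<le> ftilde t"
    using eventually_gt_at_top[of 0] by eventually_elim (intro lower, auto)
  show "\<forall>\<^sub>F t in at_top. ftilde t \<le> (\<lambda>_. 1) t"
    using eventually_gt_at_top[of 0] by eventually_elim (intro upper, auto)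
  show "(?L \<longlongrightarrow> 1) at_top" by real_asymp
qed auto

end
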